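(* Rewriting in the free $3$-category $\mathbf{Toff}$ of reversible Boolean circuits terminates: there is no infinite sequence $\alpha_1,\alpha_2,\dots$ of non-identity $3$-cells of $\mathbf{Toff}$ with ${\tt t}_2(\alpha_i)={\tt s}_2(\alpha_{i+1})$ for all $i$; equivalently, every sequence of reductions of circuits by the rules of $R_3$ (applied in any context, modulo the $3$-category axioms) is finite.
   Context: $\mathbf{Toff}$ is the free strict $3$-category generated by: one $0$-cell $\ast$; one $1$-generator, the wire $1:\ast\to\ast$ (so $1$-cells are bundles of $n$ wires); four $2$-generators (gates) $s:2\Rightarrow2$ (SWAP), $N:1\Rightarrow1$ (NOT), $T_2:2\Rightarrow2$ (controlled NOT), $T_3:3\Rightarrow3$ (Toffoli), so that $2$-cells are circuits built from these gates by parallel and sequential composition; and the set $R_3$ of $3$-generators (rewriting rules) listed below. Write $\star_0$ for parallel composition (left to right), $\star_1$ for sequential composition (diagrammatic order), $1$ also for the identity $2$-cell on one wire and $\mathrm{id}_n$ for the identity $2$-cell on $n$ wires. Let $L_3=(s\star_01)\star_1(1\star_0s)$, $L_4=(s\star_01\star_01)\star_1(1\star_0s\star_01)\star_1(1\star_01\star_0s)$, $L'_3=(1\star_0s)\star_1(s\star_01)$, $L'_4=(1\star_01\star_0s)\star_1(1\star_0s\star_01)\star_1(s\star_01\star_01)$. $R_3$ consists of: permutation rules $s\star_1s\Rrightarrow\mathrm{id}_2$ and $(s\star_01)\star_1(1\star_0s)\star_1(s\star_01)\Rrightarrow(1\star_0s)\star_1(s\star_01)\star_1(1\star_0s)$;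 annihilation rules $N\star_1N\Rrightarrow\mathrm{id}_1$, $T_2\star_1T_2\Rrightarrow\mathrm{id}_2$, $T_3\star_1T_3\Rrightarrow\mathrm{id}_3$; sliding rules $s\star_1(N\star_01)\Rrightarrow(1\star_0N)\star_1s$, $s\star_1(1\star_0N)\Rrightarrow(N\star_01)\star_1s$, $L_3\star_1(T_2\star_01)\Rrightarrow(1\star_0T_2)\star_1L_3$, $L'_3\star_1(1\star_0T_2)\Rrightarrow(T_2\star_01)\star_1L'_3$, $L_4\star_1(T_3\star_01)\Rrightarrow(1\star_0T_3)\star_1L_4$, $L'_4\star_1(1\star_0T_3)\Rrightarrow(T_3\star_01)\star_1L'_4$; and the swapped Toffoli rule $(s\star_01)\star_1T_3\Rrightarrow T_3\star_1(s\star_01)$. $3$-cells of $\mathbf{Toff}$ are formal $\star_0,\star_1,\star_2$-composites of these rules and identities, taken modulo the strict $3$-category axioms (associativity, local units, exchange); $2$-cells are likewise taken modulo these axioms. *)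

theory Defs
  imports Main
begin

datatype gate = SWAP | NOT | CNOT | TOFF

fun arity :: "gate \<Rightarrow> nat" where
  "arity SWAP = 2" | "arity NOT = 1" | "arity CNOT = 2" | "arity TOFF = 3"

text \<open>A 2-cell (circuit) on n wires is represented by n together with a word of
  whiskered gates: an occurrence (g, p) stands for id_p *0 g *0 id_(n - p - arity g);
  the word is read in diagrammatic order (first element is applied first).
  2-cells of the free strict 2-category are such words modulo the exchange law,
  i.e. modulo swapping adjacent occurrences acting on disjoint sets of wires.\<close>
type_synonym circ = "nat \<times> (gate \<times> nat) list"

definition wf_circ :: "circ \<Rightarrow> bool" where
  "wf_circ c \<longleftrightarrow> (\<forall>(g, p) \<in> set (snd c). p + arity g \<le> fst c)"

definition idc :: "nat \<Rightarrow> circ" where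
  "idc n = (n, [])"

definition gc :: "gate \<Rightarrow> circ" where
  "gc g = (arity g, [(g, 0)])"

definition shift :: "nat \<Rightarrow> (gate \<times> nat) list \<Rightarrow> (gate \<times> nat) list" where
  "shift m w = map (\<lambda>(g, p). (g, p + m)) w"

definition comp0 :: "circ \<Rightarrow> circ \<Rightarrow> circ" (infixl "\<star>\<^sub>0" 70) where
  "c \<star>\<^sub>0 d = (fst c + fst d, snd c @ shift (fst c) (snd d))"

text \<open>Sequential composition (diagrammatic order); only used on circuits with the
  same number of wires.\<close>
definition comp1 :: "circ \<Rightarrow> circ \<Rightarrow> circ" (infixl "\<star>\<^sub>1" 65) where
  "c \<star>\<^sub>1 d = (fst c, snd c @ snd d)"

definition indep :: "gate \<times> nat \<Rightarrow> gate \<times> nat \<Rightarrow> bool" where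
  "indep x y \<longleftrightarrow> snd x + arity (fst x) \<le> snd y \<or> snd y + arity (fst y) \<le> snd x"

inductive exch :: "circ \<Rightarrow> circ \<Rightarrow> bool" where
  "indep x y \<Longrightarrow> exch (n, u @ [x, y] @ v) (n, u @ [y, x] @ v)"

definition circ_eq :: "circ \<Rightarrow> circ \<Rightarrow> bool" (infix "\<approx>" 50) where
  "c \<approx> d \<longleftrightarrow> equivclp exch c d"

definition s :: circ where "s = gc SWAP"
definition N :: circ where "N = gc NOT"
definition T2 :: circ where "T2 = gc CNOT"
definition T3 :: circ where "T3 = gc TOFF"
definition one :: circ where "one = idc 1"

definition L3 :: circ where "L3 = (s \<star>\<^sub>0 one) \<star>\<^sub>1 (one \<star>\<^sub>0 s)"
definition L4 :: circ where
  "L4 = (s \<star>\<^sub>0 one \<star>\<^sub>0 one) \<star>\<^sub>1 (one \<star>\<^sub>0 s \<star>\<^sub>0 one) \<star>\<^sub>1 (one \<star>\<^sub>0 one \<star>\<^sub>0 s)"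
definition L3' :: circ where "L3' = (one \<star>\<^sub>0 s) \<star>\<^sub>1 (s \<star>\<^sub>0 one)"
definition L4' :: circ where
  "L4' = (one \<star>\<^sub>0 one \<star>\<^sub>0 s) \<star>\<^sub>1 (one \<star>\<^sub>0 s \<star>\<^sub>0 one) \<star>\<^sub>1 (s \<star>\<^sub>0 one \<star>\<^sub>0 one)"

definition R3 :: "(circ \<times> circ) set" where
  "R3 = {
    (s \<star>\<^sub>1 s, idc 2),
    ((s \<star>\<^sub>0 one) \<star>\<^sub>1 (one \<star>\<^sub>0 s) \<star>\<^sub>1 (s \<star>\<^sub>0 one),
       (one \<star>\<^sub>0 s) \<star>\<^sub>1 (s \<star>\<^sub>0 one) \<star>\<^sub>1 (one \<star>\<^sub>0 s)),
    (N \<star>\<^sub>1 N, idc 1),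
    (T2 \<star>\<^sub>1 T2, idc 2),
    (T3 \<star>\<^sub>1 T3, idc 3),
    (s \<star>\<^sub>1 (N \<star>\<^sub>0 one), (one \<star>\<^sub>0 N) \<star>\<^sub>1 s),
    (s \<star>\<^sub>1 (one \<star>\<^sub>0 N), (N \<star>\<^sub>0 one) \<star>\<^sub>1 s),
    (L3 \<star>\<^sub>1 (T2 \<star>\<^sub>0 one), (one \<star>\<^sub>0 T2) \<star>\<^sub>1 L3),
    (L3' \<star>\<^sub>1 (one \<star>\<^sub>0 T2), (T2 \<star>\<^sub>0 one) \<star>\<^sub>1 L3'),
    (L4 \<star>\<^sub>1 (T3 \<star>\<^sub>0 one), (one \<star>\<^sub>0 T3) \<star>\<^sub>1 L4),
    (L4' \<star>\<^sub>1 (one \<star>\<^sub>0 T3), (T3 \<star>\<^sub>0 one) \<star>\<^sub>1 L4'),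
    ((s \<star>\<^sub>0 one) \<star>\<^sub>1 T3, T3 \<star>\<^sub>1 (s \<star>\<^sub>0 one))
  }"

text \<open>One-step reduction of 2-cells: apply a rule in an arbitrary context
  u *1 (id_a *0 l *0 id_b) *1 v, modulo the 2-category axioms.  Every
  non-identity 3-cell of Toff is a composite of such steps.\<close>
definition red :: "circ \<Rightarrow> circ \<Rightarrow> bool" where
  "red c d \<longleftrightarrow> (\<exists>l r a b u v.
      (l, r) \<in> R3 \<and> wf_circ u \<and> wf_circ v \<and>
      fst u = a + fst l + b \<and> fst v = a + fst l + b \<and>
      c \<approx> u \<star>\<^sub>1 (idc a \<star>\<^sub>0 l \<star>\<^sub>0 idc b) \<star>\<^sub>1 v \<and>
      d \<approx> u \<star>\<^sub>1 (idc a \<star>\<^sub>0 r \<star>\<^sub>0 idc b) \<star>\<^sub>1 v)"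

end

theory Submission
  imports Defs
begin

fun stp :: "gate \<times> nat \<Rightarrow> (nat \<Rightarrow> nat) \<Rightarrow> (nat \<Rightarrow> nat)" where
  "stp (SWAP, p) h = (let m = Suc (max (h p) (h (Suc p))) in h(p := m, Suc p := m))"
| "stp (g, p) h = h"

fun gcost :: "gate \<times> nat \<Rightarrow> (nat \<Rightarrow> nat) \<Rightarrow> nat" where
  "gcost (SWAP, p) h = 0"
| "gcost (NOT, p) h = h p"
| "gcost (CNOT, p) h = h p + h (Suc p)"
| "gcost (TOFF, p) h = h p + h (Suc p) + h (Suc (Suc p))"

fun run :: "(gate \<times> nat) list \<Rightarrow> (nat \<Rightarrow> nat) \<Rightarrow> (nat \<Rightarrow> nat)" where
  "run [] h = h"
| "run (x # w) h = run w (stp x h)"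

fun cost :: "(gate \<times> nat) list \<Rightarrow> (nat \<Rightarrow> nat) \<Rightarrow> nat" where
  "cost [] h = 0"
| "cost (x # w) h = gcost x h + cost w (stp x h)"

lemma run_append[simp]: "run (w1 @ w2) h = run w2 (run w1 h)"
  by (induction w1 arbitrary: h) auto

lemma cost_append[simp]: "cost (w1 @ w2) h = cost w1 h + cost w2 (run w1 h)"
  by (induction w1 arbitrary: h) auto

lemma indep_comm:
  assumes "indep x y"
  shows "stp y (stp x h) = stp x (stp y h) \<and> gcost x h + gcost y (stp x h) = gcost y h + gcost x (stp y h)"
proof -
  obtain g p where x: "x = (g, p)" by (cases x)
  obtain g' q where y: "y = (g', q)" by (cases y)
  show ?thesis using assms unfolding x y indep_def
    by (cases g; cases g'; auto simp: Let_def fun_upd_twist fun_eq_iff)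
qed

definition nns :: "(gate \<times> nat) list \<Rightarrow> nat" where
  "nns w = length (filter (\<lambda>x. fst x \<noteq> SWAP) w)"
definition nsw :: "(gate \<times> nat) list \<Rightarrow> nat" where
  "nsw w = length (filter (\<lambda>x. fst x = SWAP) w)"
definition psum :: "nat \<Rightarrow> (gate \<times> nat) list \<Rightarrow> nat" where
  "psum n w = sum_list (map (\<lambda>x. if fst x = SWAP then n - snd x else 0) w)"

definition meas :: "(circ \<Rightarrow> nat) list" where
  "meas = [\<lambda>c. nns (snd c), \<lambda>c. nsw (snd c), \<lambda>c. psum (fst c) (snd c),
           \<lambda>c. cost (snd c) (\<lambda>_. 0)]"

lemma exch_meas: assumes "exch c d" and "f \<in> set meas" shows "f c = f d"
  using assms(1)
proof cases
  case (1 x y n u v)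
  have "cost (snd c) (\<lambda>_. 0) = cost (snd d) (\<lambda>_. 0)"
    using indep_comm[OF 1(3), of "run u (\<lambda>_. 0)"] 1 by simp
  moreover have "psum n (u @ x # y # v) = psum n (u @ y # x # v)"
    by (simp add: psum_def)
  ultimately show ?thesis using assms(2) 1
    by (auto simp: meas_def nns_def nsw_def)
qed

lemma equiv_meas: assumes "c \<approx> d" and "f \<in> set meas" shows "f c = f d"
proof -
  have "equivclp exch c d" using assms(1) by (simp add: circ_eq_def)
  then show ?thesis
  proof (induction rule: equivclp_induct)
    case base then show ?case by simp
  next
    case (step y z)
    then show ?case using exch_meas[OF _ assms(2)] by metis
  qed
qed

lemma shift_simps[simp]: "shift a [] = []" "shift a (x # w) = (fst x, snd x + a) # shift a w"
  by (auto simp: shift_def split: prod.splits)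

lemma R3_explicit: "R3 = {
  ((2, [(SWAP,0),(SWAP,0)]), (2, [])),
  ((3, [(SWAP,0),(SWAP,1),(SWAP,0)]), (3, [(SWAP,1),(SWAP,0),(SWAP,1)])),
  ((1, [(NOT,0),(NOT,0)]), (1, [])),
  ((2, [(CNOT,0),(CNOT,0)]), (2, [])),
  ((3, [(TOFF,0),(TOFF,0)]), (3, [])),
  ((2, [(SWAP,0),(NOT,0)]), (2, [(NOT,1),(SWAP,0)])),
  ((2, [(SWAP,0),(NOT,1)]), (2, [(NOT,0),(SWAP,0)])),
  ((3, [(SWAP,0),(SWAP,1),(CNOT,0)]), (3, [(CNOT,1),(SWAP,0),(SWAP,1)])),
  ((3, [(SWAP,1),(SWAP,0),(CNOT,1)]), (3, [(CNOT,0),(SWAP,1),(SWAP,0)])),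
  ((4, [(SWAP,0),(SWAP,1),(SWAP,2),(TOFF,0)]), (4, [(TOFF,1),(SWAP,0),(SWAP,1),(SWAP,2)])),
  ((4, [(SWAP,2),(SWAP,1),(SWAP,0),(TOFF,1)]), (4, [(TOFF,0),(SWAP,2),(SWAP,1),(SWAP,0)])),
  ((3, [(SWAP,0),(TOFF,0)]), (3, [(TOFF,0),(SWAP,0)]))}"
  unfolding R3_def L3_def L4_def L3'_def L4'_def s_def N_def T2_def T3_def one_def gc_def idc_def
  by (simp add: comp0_def comp1_def numeral_eq_Suc)

definition slides :: "(gate \<times> nat) list \<Rightarrow> (gate \<times> nat) list \<Rightarrow> bool" where
  "slides wr wl \<longleftrightarrow> (\<forall>h. run wr h = run wl h \<and> cost wr h < cost wl h)"

lemma sl1: "slides (shift a [(NOT,1),(SWAP,0)]) (shift a [(SWAP,0),(NOT,0)])"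
  by (auto simp: slides_def Let_def fun_eq_iff)
lemma sl2: "slides (shift a [(NOT,0),(SWAP,0)]) (shift a [(SWAP,0),(NOT,1)])"
  by (auto simp: slides_def Let_def fun_eq_iff)
lemma sl3: "slides (shift a [(CNOT,1),(SWAP,0),(SWAP,1)]) (shift a [(SWAP,0),(SWAP,1),(CNOT,0)])"
  by (auto simp: slides_def Let_def fun_eq_iff)
lemma sl4: "slides (shift a [(CNOT,0),(SWAP,1),(SWAP,0)]) (shift a [(SWAP,1),(SWAP,0),(CNOT,1)])"
  by (auto simp: slides_def Let_def fun_eq_iff)
lemma sl5: "slides (shift a [(TOFF,1),(SWAP,0),(SWAP,1),(SWAP,2)]) (shift a [(SWAP,0),(SWAP,1),(SWAP,2),(TOFF,0)])"
  by (auto simp: slides_def Let_def fun_eq_iff)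
lemma sl6: "slides (shift a [(TOFF,0),(SWAP,2),(SWAP,1),(SWAP,0)]) (shift a [(SWAP,2),(SWAP,1),(SWAP,0),(TOFF,1)])"
  by (auto simp: slides_def Let_def fun_eq_iff)
lemma sl7: "slides (shift a [(TOFF,0),(SWAP,0)]) (shift a [(SWAP,0),(TOFF,0)])"
  by (auto simp: slides_def Let_def fun_eq_iff)

lemma cnt_simps[simp]:
  "nns [] = 0" "nns (x # w) = (if fst x = SWAP then nns w else Suc (nns w))"
  "nns (w1 @ w2) = nns w1 + nns w2"
  "nsw [] = 0" "nsw (x # w) = (if fst x = SWAP then Suc (nsw w) else nsw w)"
  "nsw (w1 @ w2) = nsw w1 + nsw w2"
  "psum n [] = 0" "psum n (x # w) = (if fst x = SWAP then n - snd x else 0) + psum n w"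
  "psum n (w1 @ w2) = psum n w1 + psum n w2"
  by (simp_all add: nns_def nsw_def psum_def)

lemma in_meas: "((n, w1), (m, w2)) \<in> measures meas \<longleftrightarrow>
   nns w1 < nns w2 \<or> nns w1 = nns w2 \<and> (nsw w1 < nsw w2 \<or> nsw w1 = nsw w2 \<and>
   (psum n w1 < psum m w2 \<or> psum n w1 = psum m w2 \<and> cost w1 (\<lambda>_. 0) < cost w2 (\<lambda>_. 0)))"
  by (simp add: meas_def)

lemma slides_dec:
  assumes "slides wr wl"
    and "nns wr = nns wl" "nsw wr = nsw wl" "psum n wr = psum n wl"
  shows "((n, U @ wr @ V), (n, U @ wl @ V)) \<in> measures meas"
proof -
  have "run wr (run U (\<lambda>_. 0)) = run wl (run U (\<lambda>_. 0))"
       "cost wr (run U (\<lambda>_. 0)) < cost wl (run U (\<lambda>_. 0))"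
    using assms(1) unfolding slides_def by auto
  then show ?thesis using assms(2-4)
    by (simp add: in_meas)
qed

lemma cnt_dec:
  assumes "nns wr < nns wl \<or> nns wr = nns wl \<and> (nsw wr < nsw wl \<or> nsw wr = nsw wl \<and> psum n wr < psum n wl)"
  shows "((n, U @ wr @ V), (n, U @ wl @ V)) \<in> measures meas"
  using assms by (auto simp add: in_meas)

lemma rule_dec:
  assumes "(l, r) \<in> R3" and "n = a + fst l + b"
  shows "((n, U @ shift a (snd r) @ V), (n, U @ shift a (snd l) @ V)) \<in> measures meas"
  using assms unfolding R3_explicit
  apply (elim insertE emptyE)
  apply (simp_all only: prod.inject fst_conv snd_conv)
  subgoal by (rule cnt_dec) simp
  subgoal by (rule cnt_dec) simp
  subgoal by (rule cnt_dec) simp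
  subgoal by (rule cnt_dec) simp
  subgoal by (rule cnt_dec) simp
  subgoal by (rule slides_dec, rule sl1, simp_all)
  subgoal by (rule slides_dec, rule sl2, simp_all)
  subgoal by (rule slides_dec, rule sl3, simp_all)
  subgoal by (rule slides_dec, rule sl4, simp_all)
  subgoal by (rule slides_dec, rule sl5, simp_all)
  subgoal by (rule slides_dec, rule sl6, simp_all)
  subgoal by (rule slides_dec, rule sl7, simp_all)
  done

lemma red_dec: "red c d \<Longrightarrow> (d, c) \<in> measures meas"
proof -
  assume "red c d"
  then obtain l r a b u v where lr: "(l, r) \<in> R3" and fu: "fst u = a + fst l + b"
    and c: "c \<approx> u \<star>\<^sub>1 (idc a \<star>\<^sub>0 l \<star>\<^sub>0 idc b) \<star>\<^sub>1 v"
    and d: "d \<approx> u \<star>\<^sub>1 (idc a \<star>\<^sub>0 r \<star>\<^sub>0 idc b) \<star>\<^sub>1 v"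
    unfolding red_def by blast
  have ce: "u \<star>\<^sub>1 (idc a \<star>\<^sub>0 x \<star>\<^sub>0 idc b) \<star>\<^sub>1 v = (fst u, snd u @ shift a (snd x) @ snd v)" for x
    by (simp add: comp0_def comp1_def idc_def)
  have E: "f d = f (fst u, snd u @ shift a (snd r) @ snd v) \<and> f c = f (fst u, snd u @ shift a (snd l) @ snd v)"
    if "f \<in> set meas" for f
    using equiv_meas[OF c that] equiv_meas[OF d that] ce by auto
  have m: "((fst u, snd u @ shift a (snd r) @ snd v), (fst u, snd u @ shift a (snd l) @ snd v)) \<in> measures meas"
    by (rule rule_dec[OF lr fu])
  have e1: "nns (snd d) = nns (snd u @ shift a (snd r) @ snd v)" "nns (snd c) = nns (snd u @ shift a (snd l) @ snd v)"
    using E[of "\<lambda>c. nns (snd c)"] by (auto simp: meas_def)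
  have e2: "nsw (snd d) = nsw (snd u @ shift a (snd r) @ snd v)" "nsw (snd c) = nsw (snd u @ shift a (snd l) @ snd v)"
    using E[of "\<lambda>c. nsw (snd c)"] by (auto simp: meas_def)
  have e3: "psum (fst d) (snd d) = psum (fst u) (snd u @ shift a (snd r) @ snd v)" "psum (fst c) (snd c) = psum (fst u) (snd u @ shift a (snd l) @ snd v)"
    using E[of "\<lambda>c. psum (fst c) (snd c)"] by (auto simp: meas_def)
  have e4: "cost (snd d) (\<lambda>_. 0) = cost (snd u @ shift a (snd r) @ snd v) (\<lambda>_. 0)" "cost (snd c) (\<lambda>_. 0) = cost (snd u @ shift a (snd l) @ snd v) (\<lambda>_. 0)"
    using E[of "\<lambda>c. cost (snd c) (\<lambda>_. 0)"] by (auto simp: meas_def)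
  have "(d, c) \<in> measures meas \<longleftrightarrow> ((fst u, snd u @ shift a (snd r) @ snd v), (fst u, snd u @ shift a (snd l) @ snd v)) \<in> measures meas"
    unfolding meas_def in_measures list.map by (simp only: e1 e2 e3 e4 fst_conv snd_conv)
  then show ?thesis using m by simp
qed

theorem mainTheorem7:
  shows "\<not> (\<exists>f :: nat \<Rightarrow> circ. (\<forall>i. wf_circ (f i)) \<and> (\<forall>i. red (f i) (f (Suc i))))"
proof
  assume "\<exists>f :: nat \<Rightarrow> circ. (\<forall>i. wf_circ (f i)) \<and> (\<forall>i. red (f i) (f (Suc i)))"
  then obtain f :: "nat \<Rightarrow> circ" where "\<forall>i. red (f i) (f (Suc i))" by blast
  then have "\<forall>i. (f (Suc i), f i) \<in> measures meas" using red_dec by blast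
  moreover have "wf (measures meas)" by simp
  ultimately show False using wf_iff_no_infinite_down_chain by blast
qed

end
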